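(* Let $f,g:\mathbb{N}\to\mathbb{N}$ be functions with $n=o(f(n))$ and $g(n)=o(n^{2})$ as $n\to\infty$, and let $l:\mathbb{N}\to\mathbb{N}$ satisfy $f(n)\le l(n)\le g(n)$ for every $n\in\mathbb{N}$. Then $$r(l(n))\sim \frac{l(n)^{2}}{2\alpha_n}\qquad (n\to\infty).$$
   Context: For $n\in\mathbb{N}$ let $G_n=G(n,3,1)$ be the graph whose vertex set $V_n$ consists of all $3$-element subsets of $\{1,\dots,n\}$ (equivalently, $(0,1)$-vectors in $\mathbb{R}^n$ with exactly three ones), two vertices being adjacent if and only if the corresponding sets share exactly one element (equivalently, the vectors have scalar product $1$). Let $\alpha_n$ denote the independence number of $G(n,3,1)$. For $W\subseteq V_n$ let $r(W)$ be the number of edges of $G(n,3,1)$ with both endpoints in $W$, and for an integer $0\le l\le \binom{n}{3}$ let $r(l)=\min\{r(W): W\subseteq V_n,\ |W|=l\}$ (so $r(l(n))$ is computed in $G(n,3,1)$). *)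

theory Defs
  imports Main "HOL-Library.Landau_Symbols"
begin

definition V :: "nat \<Rightarrow> nat set set" where
  "V n = {A. A \<subseteq> {1..n} \<and> card A = 3}"

definition adj :: "nat set \<Rightarrow> nat set \<Rightarrow> bool" where
  "adj A B \<longleftrightarrow> card (A \<inter> B) = 1"

definition alpha :: "nat \<Rightarrow> nat" where
  "alpha n = Max {card W | W. W \<subseteq> V n \<and> (\<forall>A\<in>W. \<forall>B\<in>W. \<not> adj A B)}"

definition redges :: "nat set set \<Rightarrow> nat" where
  "redges W = card {{A, B} | A B. A \<in> W \<and> B \<in> W \<and> adj A B}"

definition rmin :: "nat \<Rightarrow> nat \<Rightarrow> nat" where
  "rmin n l = Min {redges W | W. W \<subseteq> V n \<and> card W = l}"

end

theory Submission
  imports Defs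
begin
lemma two_sub_meet:
  assumes "P \<subseteq> A" "Q \<subseteq> A" "card A = 3" "card P = 2" "card Q = 2"
  shows "P \<inter> Q \<noteq> {}"
proof
  assume h: "P \<inter> Q = {}"
  have fA: "finite A" using assms(3) card.infinite by fastforce
  have "finite P" "finite Q" using fA assms finite_subset by auto
  hence "card (P \<union> Q) = 4" using h assms by (simp add: card_Un_disjoint)
  moreover have "card (P \<union> Q) \<le> 3" using card_mono[OF fA] assms by (metis Un_least)
  ultimately show False by simp
qed

lemma inter2:
  assumes "card A = 3" "card B = 3" "B \<inter> A \<noteq> {}" "card (A \<inter> B) \<noteq> 1" "A \<noteq> B"
  shows "card (B \<inter> A) = 2 \<and> (\<exists>y. B - A = {y})"
proof -
  have fA: "finite A" "finite B" using assms card.infinite by fastforce+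
  have le: "card (B \<inter> A) \<le> 3" using card_mono[OF fA(2)] assms(2) by (metis inf_le1)
  have ne3: "card (B \<inter> A) \<noteq> 3"
  proof
    assume "card (B \<inter> A) = 3"
    hence "B \<inter> A = A" "B \<inter> A = B" using card_subset_eq fA assms(1,2) by (metis inf_le1 inf_le2)+
    thus False using assms(5) by simp
  qed
  have ne0: "card (B \<inter> A) \<noteq> 0" using assms(3) fA by simp
  have c2: "card (B \<inter> A) = 2" using le ne3 ne0 assms(4) by (simp add: Int_commute)
  have "card (B - A) = 1" using card_Diff_subset_Int[of B A] fA c2 assms(2)
    by (simp add: Diff_Int2 card_Diff_subset_Int) 
  then obtain y where "B - A = {y}" using card_1_singletonE by blast
  thus ?thesis using c2 by blast
qed

lemma nbhd_bound:
  assumes F3: "\<forall>X\<in>F. card X = 3" and FI: "\<forall>X\<in>F. \<forall>Y\<in>F. X \<noteq> Y \<longrightarrow> card (X \<inter> Y) \<noteq> 1"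
    and AF: "A \<in> F" and fin: "finite F"
  defines "N \<equiv> {B\<in>F. B \<inter> A \<noteq> {}}"
  shows "card N \<le> card (\<Union>N)"
proof -
  define N' where "N' = N - {A}"
  have cA: "card A = 3" using F3 AF by auto
  have fA: "finite A" using cA card.infinite by fastforce
  have finN: "finite N" unfolding N_def using fin by auto
  have finU: "finite (\<Union>N)" using finN F3 unfolding N_def
    by (metis (no_types, lifting) card.infinite finite_Union mem_Collect_eq zero_neq_numeral)
  have AN: "A \<in> N" using AF cA unfolding N_def by auto
  have props: "\<And>B. B \<in> N' \<Longrightarrow> card (B \<inter> A) = 2 \<and> (\<exists>y. B - A = {y})"
  proof -
    fix B assume "B \<in> N'"
    hence "B \<in> F" "B \<inter> A \<noteq> {}" "B \<noteq> A" unfolding N'_def N_def by auto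
    thus "card (B \<inter> A) = 2 \<and> (\<exists>y. B - A = {y})" using inter2[of A B] cA F3 FI AF by metis
  qed
  define y where "y B = the_elem (B - A)" for B
  have yB: "\<And>B. B \<in> N' \<Longrightarrow> B - A = {y B}" using props unfolding y_def by fastforce
  have Bdec: "\<And>B. B \<in> N' \<Longrightarrow> B = (B \<inter> A) \<union> {y B} \<and> y B \<notin> A" using yB by blast
  define Y where "Y = \<Union>N - A"
  have UN: "\<Union>N = A \<union> Y" using AN unfolding Y_def by blast
  have cU: "card (\<Union>N) = 3 + card Y" using UN cA fA finU unfolding Y_def
    by (metis Diff_disjoint card_Un_disjoint finite_Diff Un_Diff_cancel)
  have cN: "card N = Suc (card N')" unfolding N'_def using AN finN
    by (metis card_Suc_Diff1)
  have finY: "finite Y" using finU unfolding Y_def by auto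
  have yY: "\<And>B. B \<in> N' \<Longrightarrow> y B \<in> Y" using yB unfolding Y_def N'_def by blast
  show ?thesis
  proof (cases "inj_on y N'")
    case True
    have "card N' \<le> card Y" using card_inj_on_le[OF True _ finY] yY by blast
    thus ?thesis using cU cN by simp
  next
    case False
    then obtain B C where BC: "B \<in> N'" "C \<in> N'" "B \<noteq> C" "y B = y C" unfolding inj_on_def by blast
    define z where "z = y B"
    have BA: "B \<inter> A \<noteq> C \<inter> A" using Bdec[OF BC(1)] Bdec[OF BC(2)] BC(3,4) by metis
    have allz: "\<forall>D\<in>N'. y D = z"
    proof (rule ccontr)
      assume "\<not> (\<forall>D\<in>N'. y D = z)"
      then obtain D where D: "D \<in> N'" "y D \<noteq> z" by blast
      have eq: "\<And>E. E \<in> N' \<Longrightarrow> y E = z \<Longrightarrow> D \<inter> A = E \<inter> A"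
      proof -
        fix E assume E: "E \<in> N'" "y E = z"
        have DE: "D \<noteq> E" using D E by auto
        have DEF: "D \<in> F" "E \<in> F" using D E unfolding N'_def N_def by auto
        have "D \<inter> E = (D \<inter> A) \<inter> (E \<inter> A)" using Bdec[OF D(1)] Bdec[OF E(1)] D(2) E(2) by blast
        hence c1: "card ((D \<inter> A) \<inter> (E \<inter> A)) \<noteq> 1" using FI DEF DE by metis
        have c2: "card (D \<inter> A) = 2" "card (E \<inter> A) = 2" using props D(1) E(1) by auto
        have ne: "(D \<inter> A) \<inter> (E \<inter> A) \<noteq> {}" using two_sub_meet[OF _ _ cA c2] by blast
        have fDA: "finite (D \<inter> A)" "finite (E \<inter> A)" using fA by auto
        have le: "card ((D \<inter> A) \<inter> (E \<inter> A)) \<le> 2" using card_mono[OF fDA(1)] c2 by (metis inf_le1)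
        have "card ((D \<inter> A) \<inter> (E \<inter> A)) = 2" using le ne c1 fDA
          by (metis (no_types, lifting) One_nat_def Suc_1 card_0_eq finite_Int le_SucE le_zero_eq)
        hence "(D \<inter> A) \<inter> (E \<inter> A) = D \<inter> A" "(D \<inter> A) \<inter> (E \<inter> A) = E \<inter> A"
          using card_subset_eq fDA c2 by (metis inf_le1 inf_le2)+
        thus "D \<inter> A = E \<inter> A" by simp
      qed
      have "B \<inter> A = C \<inter> A" using eq[OF BC(1)] eq[OF BC(2)] BC(4) z_def by metis
      thus False using BA by simp
    qed
    have injA: "inj_on (\<lambda>D. D \<inter> A) N'"
      unfolding inj_on_def using Bdec allz by metis
    have img: "(\<lambda>D. D \<inter> A) ` N' \<subseteq> {P. P \<subseteq> A \<and> card P = 2}" using props by auto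
    have c3: "card {P. P \<subseteq> A \<and> card P = 2} = 3" using n_subsets[OF fA, of 2] cA by (simp add: choose_two)
    have "card N' \<le> 3" using card_inj_on_le[OF injA img] c3 fA by simp
    moreover have "Y \<noteq> {}" using yY BC(1) by blast
    hence "card Y \<ge> 1" using finY by (simp add: Suc_leI card_gt_0_iff)
    ultimately show ?thesis using cU cN by simp
  qed
qed





lemma fam_bound:
  "finite F \<Longrightarrow> \<forall>X\<in>F. card X = 3 \<Longrightarrow> \<forall>X\<in>F. \<forall>Y\<in>F. X \<noteq> Y \<longrightarrow> card (X \<inter> Y) \<noteq> 1
   \<Longrightarrow> card F \<le> card (\<Union>F)"
proof (induction "card F" arbitrary: F rule: less_induct)
  case less
  show ?case
  proof (cases "F = {}")
    case True thus ?thesis by simp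
  next
    case False
    then obtain A where AF: "A \<in> F" by blast
    define N where "N = {B\<in>F. B \<inter> A \<noteq> {}}"
    define T where "T = \<Union>N"
    have cA: "card A = 3" using less.prems(2) AF by blast
    have NT: "card N \<le> card T" unfolding N_def T_def
      using nbhd_bound[OF less.prems(2) less.prems(3) AF less.prems(1)] by blast
    have cl1: "\<And>C. C \<in> F \<Longrightarrow> C \<inter> T \<noteq> {} \<Longrightarrow> C \<in> N"
    proof -
      fix C assume C: "C \<in> F" "C \<inter> T \<noteq> {}"
      then obtain B x where B: "B \<in> N" "x \<in> C" "x \<in> B" unfolding T_def by blast
      show "C \<in> N"
      proof (rule ccontr)
        assume "C \<notin> N"
        hence CA: "C \<inter> A = {}" using C unfolding N_def by auto
        have BF: "B \<in> F" "B \<inter> A \<noteq> {}" using B unfolding N_def by auto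
        have BA: "B \<noteq> A" using CA B by blast
        have cB: "card B = 3" using less.prems(2) BF(1) by blast
        have cB2: "card (A \<inter> B) \<noteq> 1" using less.prems(3) BF(1) AF BA by blast
        from inter2[OF cA cB BF(2) cB2 BA[symmetric]] obtain y where y: "B - A = {y}" by blast
        have s1: "C \<inter> B \<subseteq> {y}" using y CA by blast
        have s2: "x \<in> C \<inter> B" using B by blast
        have "C \<inter> B = {y}" using s1 s2 by auto
        moreover have "C \<noteq> B" using CA BF by blast
        hence "card (C \<inter> B) \<noteq> 1" using less.prems(3) C(1) BF(1) by blast
        ultimately show False by simp
      qed
    qed
    define F' where "F' = F - N"
    have AN: "A \<in> N" unfolding N_def using AF cA by auto
    have "\<forall>X\<in>F. finite X"
    proof
      fix X assume "X \<in> F" hence "card X = 3" using less.prems(2) by blast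
      thus "finite X" using card.infinite by fastforce
    qed
    hence finU: "finite (\<Union>F)" using less.prems(1) by blast
    have NF: "N \<subseteq> F" unfolding N_def by auto
    have cFN: "card F' = card F - card N" unfolding F'_def using NF less.prems(1)
      by (simp add: card_Diff_subset finite_subset)
    have Np: "card N > 0" using AN NF less.prems(1) by (auto simp: card_gt_0_iff intro: finite_subset)
    have NleF: "card N \<le> card F" using NF less.prems(1) by (rule card_mono[rotated])
    have lt: "card F' < card F" using cFN Np NleF by linarith
    have p1: "finite F'" unfolding F'_def using less.prems(1) by blast
    have p2: "\<forall>X\<in>F'. card X = 3" unfolding F'_def using less.prems(2) by blast
    have p3: "\<forall>X\<in>F'. \<forall>Y\<in>F'. X \<noteq> Y \<longrightarrow> card (X \<inter> Y) \<noteq> 1" unfolding F'_def using less.prems(3) by blast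
    have IH: "card F' \<le> card (\<Union>F')" using less.hyps[OF lt p1 p2 p3] .
    have sub: "\<Union>F' \<subseteq> \<Union>F - T" unfolding F'_def using cl1 by blast
    have TU: "T \<subseteq> \<Union>F" unfolding T_def using NF by blast
    have "card (\<Union>F') \<le> card (\<Union>F) - card T"
      using card_mono[OF _ sub] finU TU by (simp add: card_Diff_subset finite_subset)
    moreover have "card F = card N + card F'" using cFN NleF by linarith
    moreover have "card T \<le> card (\<Union>F)" using card_mono[OF finU TU] .
    ultimately show ?thesis using IH NT by linarith
  qed
qed


lemma finite_V: "finite (V n)"
  unfolding V_def by (rule finite_subset[of _ "Pow {1..n}"]) auto

lemma alpha_set_fin: "finite {card W | W. W \<subseteq> V n \<and> (\<forall>A\<in>W. \<forall>B\<in>W. \<not> adj A B)}"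
proof -
  have "{card W | W. W \<subseteq> V n \<and> (\<forall>A\<in>W. \<forall>B\<in>W. \<not> adj A B)} \<subseteq> card ` Pow (V n)" by blast
  thus ?thesis using finite_V by (meson finite_Pow_iff finite_imageI finite_subset)
qed

lemma alpha_ge: "I \<subseteq> V n \<Longrightarrow> \<forall>A\<in>I. \<forall>B\<in>I. \<not> adj A B \<Longrightarrow> card I \<le> alpha n"
  unfolding alpha_def by (rule Max_ge[OF alpha_set_fin]) blast

lemma alpha_le: "alpha n \<le> n"
  unfolding alpha_def
proof (rule Max.boundedI[OF alpha_set_fin])
  show "{card W | W. W \<subseteq> V n \<and> (\<forall>A\<in>W. \<forall>B\<in>W. \<not> adj A B)} \<noteq> {}" by blast
next
  fix c assume "c \<in> {card W | W. W \<subseteq> V n \<and> (\<forall>A\<in>W. \<forall>B\<in>W. \<not> adj A B)}"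
  then obtain W where W: "c = card W" "W \<subseteq> V n" "\<forall>A\<in>W. \<forall>B\<in>W. \<not> adj A B" by blast
  have fW: "finite W" using W(2) finite_V finite_subset by blast
  have c3: "\<forall>X\<in>W. card X = 3" using W(2) unfolding V_def by blast
  have ci: "\<forall>X\<in>W. \<forall>Y\<in>W. X \<noteq> Y \<longrightarrow> card (X \<inter> Y) \<noteq> 1" using W(3) unfolding adj_def by blast
  have "card W \<le> card (\<Union>W)" by (rule fam_bound[OF fW c3 ci])
  also have "card (\<Union>W) \<le> card {1..n}"
    by (rule card_mono) (use W(2) in \<open>auto simp: V_def\<close>)
  finally show "c \<le> n" using W(1) by simp
qed




definition deg :: "('a \<Rightarrow> 'a \<Rightarrow> bool) \<Rightarrow> 'a set \<Rightarrow> 'a \<Rightarrow> nat" where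
  "deg E W v = card {u\<in>W. E v u}"

lemma caro_wei:
  "finite W \<Longrightarrow> \<forall>v. \<not> E v v \<Longrightarrow> \<forall>a b. E a b \<longrightarrow> E b a \<Longrightarrow>
   \<exists>I\<subseteq>W. (\<forall>a\<in>I. \<forall>b\<in>I. \<not> E a b) \<and> (\<Sum>v\<in>W. 1 / (real (deg E W v) + 1)) \<le> real (card I)"
proof (induction "card W" arbitrary: W rule: less_induct)
  case less
  show ?case
  proof (cases "W = {}")
    case True thus ?thesis by auto
  next
    case False
    define m where "m = Min (deg E W ` W)"
    have "m \<in> deg E W ` W" unfolding m_def using False less.prems(1) by (intro Min_in) auto
    then obtain v where v: "v \<in> W" "deg E W v = m" by blast
    have vmin: "\<And>u. u \<in> W \<Longrightarrow> deg E W v \<le> deg E W u"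
      using v(2) less.prems(1) unfolding m_def by simp
    define Nb where "Nb = {u\<in>W. E v u}"
    define N where "N = insert v Nb"
    define W' where "W' = W - N"
    have NW: "N \<subseteq> W" unfolding N_def Nb_def using v(1) by blast
    have finN: "finite N" using NW less.prems(1) finite_subset by blast
    have vNb: "v \<notin> Nb" unfolding Nb_def using less.prems(2) by blast
    have cN: "card N = deg E W v + 1" unfolding N_def deg_def
      using vNb finN unfolding N_def Nb_def by (simp add: card_insert_if)
    have lt: "card W' < card W" unfolding W'_def using NW v(1) less.prems(1)
      by (metis Diff_iff N_def card_mono finite_Diff insertCI le_neq_implies_less psubsetI psubset_card_mono subset_iff Diff_subset)
    obtain I' where I': "I' \<subseteq> W'" "\<forall>a\<in>I'. \<forall>b\<in>I'. \<not> E a b"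
       "(\<Sum>u\<in>W'. 1 / (real (deg E W' u) + 1)) \<le> real (card I')"
      using less.hyps[OF lt _ less.prems(2,3)] less.prems(1) unfolding W'_def by blast
    define I where "I = insert v I'"
    have vI': "v \<notin> I'" using I'(1) unfolding W'_def N_def by blast
    have finI': "finite I'" using I'(1) less.prems(1) unfolding W'_def by (meson finite_Diff finite_subset)
    have cI: "card I = card I' + 1" unfolding I_def using vI' finI' by simp
    have indep: "\<forall>a\<in>I. \<forall>b\<in>I. \<not> E a b"
    proof (intro ballI)
      fix a b assume ab: "a \<in> I" "b \<in> I"
      have nv: "\<And>x. x \<in> I' \<Longrightarrow> \<not> E v x" using I'(1) unfolding W'_def N_def Nb_def by blast
      show "\<not> E a b"
        using ab I'(2) nv less.prems(2,3) unfolding I_def by blast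
    qed
    have IW: "I \<subseteq> W" unfolding I_def using I'(1) v(1) unfolding W'_def by blast
    have split: "(\<Sum>u\<in>W. 1 / (real (deg E W u) + 1)) =
        (\<Sum>u\<in>N. 1 / (real (deg E W u) + 1)) + (\<Sum>u\<in>W'. 1 / (real (deg E W u) + 1))"
      unfolding W'_def using NW less.prems(1) by (metis add.commute sum.subset_diff)
    have s1: "(\<Sum>u\<in>N. 1 / (real (deg E W u) + 1)) \<le> (\<Sum>u\<in>N. 1 / (real (deg E W v) + 1))"
    proof (rule sum_mono)
      fix u assume "u \<in> N"
      hence "deg E W v \<le> deg E W u" using vmin NW by blast
      thus "1 / (real (deg E W u) + 1) \<le> 1 / (real (deg E W v) + 1)"
        by (simp add: frac_le)
    qed
    also have "\<dots> = 1" using cN by simp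
    finally have s1': "(\<Sum>u\<in>N. 1 / (real (deg E W u) + 1)) \<le> 1" .
    have s2: "(\<Sum>u\<in>W'. 1 / (real (deg E W u) + 1)) \<le> (\<Sum>u\<in>W'. 1 / (real (deg E W' u) + 1))"
    proof (rule sum_mono)
      fix u assume "u \<in> W'"
      have "deg E W' u \<le> deg E W u" unfolding deg_def W'_def
        by (rule card_mono) (use less.prems(1) in auto)
      thus "1 / (real (deg E W u) + 1) \<le> 1 / (real (deg E W' u) + 1)"
        by (simp add: frac_le)
    qed
    have "(\<Sum>u\<in>W. 1 / (real (deg E W u) + 1)) \<le> real (card I)"
      using split s1' s2 I'(3) cI by simp
    thus ?thesis using IW indep by blast
  qed
qed

lemma am_hm:
  fixes x :: "'a \<Rightarrow> real"
  assumes "finite W" "W \<noteq> {}" "\<And>v. v \<in> W \<Longrightarrow> x v > 0"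
  shows "real (card W)^2 / (\<Sum>v\<in>W. x v) \<le> (\<Sum>v\<in>W. 1 / x v)"
proof -
  define S where "S = (\<Sum>v\<in>W. x v)"
  define l where "l = real (card W)"
  have lp: "l > 0" unfolding l_def using assms(1,2) by (simp add: card_gt_0_iff)
  have Sp: "S > 0" unfolding S_def using assms by (intro sum_pos) auto
  define a where "a = S / l"
  have ap: "a > 0" unfolding a_def using lp Sp by simp
  have t: "\<And>v. v \<in> W \<Longrightarrow> (2*a - x v) / a^2 \<le> 1 / x v"
  proof -
    fix v assume "v \<in> W"
    hence xp: "x v > 0" using assms(3) by blast
    have "0 \<le> (a - x v)^2" by simp
    hence "x v * (2*a - x v) \<le> a^2" by (simp add: power2_eq_square algebra_simps)
    thus "(2*a - x v) / a^2 \<le> 1 / x v" using xp ap by (simp add: field_simps)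
  qed
  have "(\<Sum>v\<in>W. (2*a - x v) / a^2) = (2*a*l - S) / a^2"
    unfolding S_def l_def by (simp add: sum_divide_distrib[symmetric] sum_subtractf)
  also have "\<dots> = l^2 / S" unfolding a_def using lp Sp by (simp add: field_simps power2_eq_square)
  finally have "l^2 / S = (\<Sum>v\<in>W. (2*a - x v) / a^2)" by simp
  also have "\<dots> \<le> (\<Sum>v\<in>W. 1 / x v)" by (rule sum_mono) (rule t)
  finally show ?thesis unfolding l_def S_def .
qed


lemma handshake:
  assumes fW: "finite W"
  shows "(\<Sum>v\<in>W. deg E W v) \<le> 2 * card {{a, b} | a b. a \<in> W \<and> b \<in> W \<and> E a b}"
proof -
  define Ed where "Ed = {{a, b} | a b. a \<in> W \<and> b \<in> W \<and> E a b}"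
  define Sg where "Sg = (SIGMA v:W. {u\<in>W. E v u})"
  have finEd: "finite Ed" unfolding Ed_def
  proof (rule finite_subset[of _ "(\<lambda>(a,b). {a,b}) ` (W \<times> W)"])
    show "finite ((\<lambda>(a,b). {a,b}) ` (W \<times> W))" using fW by simp
  qed auto
  have eqS: "(\<Sum>v\<in>W. deg E W v) = card Sg" unfolding Sg_def deg_def
    using fW by (subst card_SigmaI) auto
  have sub: "Sg \<subseteq> (\<Union>e\<in>Ed. {p\<in>Sg. {fst p, snd p} = e})"
  proof (rule subsetI)
    fix p assume pS: "p \<in> Sg"
    then obtain v u where p: "p = (v,u)" "v \<in> W" "u \<in> W" "E v u" unfolding Sg_def by blast
    have "{v,u} \<in> Ed" unfolding Ed_def using p(2-4) by blast
    thus "p \<in> (\<Union>e\<in>Ed. {p\<in>Sg. {fst p, snd p} = e})" using pS p(1) by (intro UN_I[of "{v,u}"]) auto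
  qed
  have finSg: "finite Sg" unfolding Sg_def using fW by simp
  have "card Sg \<le> card (\<Union>e\<in>Ed. {p\<in>Sg. {fst p, snd p} = e})"
    by (rule card_mono[OF _ sub]) (use finEd finSg in simp)
  also have "\<dots> \<le> (\<Sum>e\<in>Ed. card {p\<in>Sg. {fst p, snd p} = e})" by (rule card_UN_le[OF finEd])
  also have "\<dots> \<le> (\<Sum>e\<in>Ed. 2)"
  proof (rule sum_mono)
    fix e assume "e \<in> Ed"
    then obtain a b where e: "e = {a, b}" unfolding Ed_def by blast
    have "{p\<in>Sg. {fst p, snd p} = e} \<subseteq> {(a,b),(b,a)}" unfolding e by (auto simp: doubleton_eq_iff)
    hence "card {p\<in>Sg. {fst p, snd p} = e} \<le> card {(a,b),(b,a)}" by (intro card_mono) auto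
    also have "\<dots> \<le> 2" by (rule card_insert_le_m1) simp_all
    finally show "card {p\<in>Sg. {fst p, snd p} = e} \<le> 2" .
  qed
  also have "\<dots> = 2 * card Ed" by simp
  finally show ?thesis unfolding Ed_def[symmetric] eqS .
qed

definition adj' :: "nat set \<Rightarrow> nat set \<Rightarrow> bool" where
  "adj' A B \<longleftrightarrow> adj A B \<and> A \<noteq> B"

lemma finite_redges_set: "finite W \<Longrightarrow> finite {{A, B} | A B. A \<in> W \<and> B \<in> W \<and> P A B}"
  by (rule finite_subset[of _ "(\<lambda>(a,b). {a,b}) ` (W \<times> W)"]) auto




lemma lower_bound:
  assumes WV: "W \<subseteq> V n" and lp: "card W > 0"
  shows "real (card W)^2 \<le> real (alpha n) * (2 * real (redges W) + real (card W))"
proof -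
  have fW: "finite W" using WV finite_V finite_subset by blast
  obtain I where I: "I \<subseteq> W" "\<forall>a\<in>I. \<forall>b\<in>I. \<not> adj' a b"
      "(\<Sum>v\<in>W. 1 / (real (deg adj' W v) + 1)) \<le> real (card I)"
    using caro_wei[OF fW, of adj'] unfolding adj'_def adj_def by (auto simp: Int_commute)
  have Iind: "\<forall>a\<in>I. \<forall>b\<in>I. \<not> adj a b"
  proof (intro ballI)
    fix a b assume ab: "a \<in> I" "b \<in> I"
    have "card a = 3" using ab I(1) WV unfolding V_def by blast
    thus "\<not> adj a b" using I(2) ab unfolding adj'_def adj_def by fastforce
  qed
  have Ial: "real (card I) \<le> real (alpha n)" using alpha_ge[OF _ Iind] I(1) WV by simp
  have hs: "(\<Sum>v\<in>W. deg adj' W v) \<le> 2 * redges W"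
  proof -
    have "card {{a, b} | a b. a \<in> W \<and> b \<in> W \<and> adj' a b} \<le> redges W"
      unfolding redges_def adj'_def
      by (rule card_mono[OF finite_redges_set[OF fW]]) blast
    thus ?thesis using handshake[OF fW, of adj'] by linarith
  qed
  have am: "real (card W)^2 / (\<Sum>v\<in>W. real (deg adj' W v) + 1) \<le> (\<Sum>v\<in>W. 1 / (real (deg adj' W v) + 1))"
    using am_hm[OF fW, of "\<lambda>v. real (deg adj' W v) + 1"] lp by fastforce
  have Sdef: "(\<Sum>v\<in>W. real (deg adj' W v) + 1) = real (\<Sum>v\<in>W. deg adj' W v) + real (card W)"
    by (simp add: sum.distrib)
  have "0 \<le> (\<Sum>v\<in>W. real (deg adj' W v))" by (rule sum_nonneg) simp
  hence Spos: "(\<Sum>v\<in>W. real (deg adj' W v) + 1) > 0" using lp by (simp add: sum.distrib)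
  have "real (card W)^2 \<le> real (alpha n) * (\<Sum>v\<in>W. real (deg adj' W v) + 1)"
  proof -
    let ?S = "(\<Sum>v\<in>W. real (deg adj' W v) + 1)"
    let ?H = "(\<Sum>v\<in>W. 1 / (real (deg adj' W v) + 1))"
    have "real (card W)^2 \<le> ?H * ?S" using am by (subst (asm) pos_divide_le_eq[OF Spos])
    also have "\<dots> \<le> real (alpha n) * ?S"
      by (rule mult_right_mono) (use I(3) Ial Spos in linarith)+
    finally show ?thesis .
  qed
  also have "\<dots> \<le> real (alpha n) * (2 * real (redges W) + real (card W))"
  proof (rule mult_left_mono)
    have "real (\<Sum>v\<in>W. deg adj' W v) \<le> real (2 * redges W)" using hs by (rule of_nat_mono)
    thus "(\<Sum>v\<in>W. real (deg adj' W v) + 1) \<le> 2 * real (redges W) + real (card W)" using Sdef by simp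
  qed simp
  finally show ?thesis .
qed




lemma tri_inter:
  fixes c j j' t t' :: nat
  assumes "2*t+2 < c" "2*t'+2 < c"
  shows "{c+j, 2*t+1, 2*t+2} \<inter> {c+j', 2*t'+1, 2*t'+2} =
     (if j = j' then {c+j} else {}) \<union> (if t = t' then {2*t+1, 2*t+2} else {})"
  using assms by (auto split: if_splits)


definition Tr :: "nat \<Rightarrow> nat \<Rightarrow> nat \<Rightarrow> nat set" where
  "Tr m k p = {2*m+1 + p mod k, 2*(p div k)+1, 2*(p div k)+2}"

lemma div_lt: "p < l \<Longrightarrow> l \<le> k*m \<Longrightarrow> p div k < (m::nat)"
  by (metis less_le_trans mult.commute div_less_iff_less_mult gr_zeroI mult_0 not_less_zero)

lemma Tr_inter:
  assumes "p div k < m" "q div k < m"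
  shows "Tr m k p \<inter> Tr m k q = (if p mod k = q mod k then {2*m+1 + p mod k} else {}) \<union>
            (if p div k = q div k then {2*(p div k)+1, 2*(p div k)+2} else {})"
proof -
  have "2*(p div k)+2 < 2*m+1" "2*(q div k)+2 < 2*m+1" using assms by auto
  thus ?thesis unfolding Tr_def using tri_inter by presburger
qed

lemma Tr_card: "p div k < m \<Longrightarrow> card (Tr m k p) = 3" unfolding Tr_def
  by (simp add: card_insert_if)

lemma Tr_V: "p div k < m \<Longrightarrow> 0 < k \<Longrightarrow> n = 2*m + k \<Longrightarrow> Tr m k p \<in> V n"
  unfolding V_def using Tr_card[of p k m] unfolding Tr_def
  by (auto simp: mod_less_divisor less_imp_le_nat) (metis add_le_mono le_refl mod_less_divisor Suc_leI add_Suc_right)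

lemma Tr_inj:
  assumes "p div k < m" "q div k < m" "Tr m k p = Tr m k q"
  shows "p = q"
proof -
  have e: "Tr m k p \<inter> Tr m k q = Tr m k p" using assms(3) by simp
  have "p mod k = q mod k"
  proof (rule ccontr)
    assume "p mod k \<noteq> q mod k"
    hence "card (Tr m k p \<inter> Tr m k q) \<le> 2" using Tr_inter[OF assms(1,2)] by (simp add: card_insert_if)
    thus False using e Tr_card[OF assms(1)] by simp
  qed
  moreover have "p div k = q div k"
  proof (rule ccontr)
    assume "p div k \<noteq> q div k"
    hence "card (Tr m k p \<inter> Tr m k q) \<le> 1" using Tr_inter[OF assms(1,2)] by simp
    thus False using e Tr_card[OF assms(1)] by simp
  qed
  ultimately show ?thesis by (metis div_mult_mod_eq)
qed

lemma Tr_adj: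
  assumes "p div k < m" "q div k < m" "adj (Tr m k p) (Tr m k q)"
  shows "p mod k = q mod k"
proof (rule ccontr)
  assume "p mod k \<noteq> q mod k"
  hence "card (Tr m k p \<inter> Tr m k q) \<noteq> 1" using Tr_inter[OF assms(1,2)] by (simp add: card_insert_if)
  thus False using assms(3) unfolding adj_def by simp
qed

lemma card_same_res: "card {p. p < q \<and> p mod k = q mod (k::nat)} \<le> q div k"
proof -
  have "{p. p < q \<and> p mod k = q mod k} \<subseteq> (\<lambda>i. q mod k + k*i) ` {..<q div k}"
  proof
    fix p assume "p \<in> {p. p < q \<and> p mod k = q mod k}"
    hence p: "p < q" "p mod k = q mod k" by auto
    have "p div k \<le> q div k" using p(1) by (simp add: div_le_mono)
    moreover have "p div k \<noteq> q div k" using p by (metis div_mult_mod_eq less_irrefl)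
    ultimately have "p div k < q div k" by simp
    moreover have "p = q mod k + k * (p div k)" using p(2) by (metis div_mult_mod_eq add.commute mult.commute)
    ultimately show "p \<in> (\<lambda>i. q mod k + k*i) ` {..<q div k}" by blast
  qed
  hence "card {p. p < q \<and> p mod k = q mod k} \<le> card ((\<lambda>i. q mod k + k*i) ` {..<q div k})"
    by (intro card_mono) auto
  also have "\<dots> \<le> q div k" using card_image_le[of "{..<q div k}"] by simp
  finally show ?thesis .
qed

lemma gauss_le: "2 * (\<Sum>q<l. real q) \<le> real l ^ 2"
proof (induction l)
  case 0 thus ?case by simp
next
  case (Suc l) thus ?case by (simp add: power2_eq_square algebra_simps)
qed

lemma rmin_upper:
  assumes n: "n = 2*m + k" and k: "0 < k" and lkm: "l \<le> k*m"
  shows "real (rmin n l) \<le> real l ^ 2 / (2 * real k)"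
    and "\<exists>W. W \<subseteq> V n \<and> card W = l \<and> rmin n l = redges W"
proof -
  define W where "W = Tr m k ` {..<l}"
  have dl: "\<And>p. p < l \<Longrightarrow> p div k < m" using div_lt lkm by blast
  have WV: "W \<subseteq> V n" unfolding W_def using Tr_V dl k n by blast
  have injT: "inj_on (Tr m k) {..<l}" unfolding inj_on_def using Tr_inj dl by blast
  have cW: "card W = l" unfolding W_def using card_image[OF injT] by simp
  define S where "S = {redges W | W. W \<subseteq> V n \<and> card W = l}"
  have finS: "finite S"
  proof -
    have "S \<subseteq> redges ` Pow (V n)" unfolding S_def by blast
    thus ?thesis using finite_V by (meson finite_Pow_iff finite_imageI finite_subset)
  qed
  have WS: "redges W \<in> S" unfolding S_def using WV cW by blast
  have "rmin n l \<in> S" unfolding rmin_def S_def[symmetric] using finS WS by (intro Min_in) auto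
  thus "\<exists>W. W \<subseteq> V n \<and> card W = l \<and> rmin n l = redges W" unfolding S_def by blast
  have r1: "rmin n l \<le> redges W" unfolding rmin_def S_def[symmetric] using finS WS by simp
  define P where "P = {(p,q). p < q \<and> q < l \<and> p mod k = q mod k}"
  have finP: "finite P" unfolding P_def by (rule finite_subset[of _ "{..<l} \<times> {..<l}"]) auto
  have Esub: "{{A, B} | A B. A \<in> W \<and> B \<in> W \<and> adj A B} \<subseteq> (\<lambda>(p,q). {Tr m k p, Tr m k q}) ` P"
  proof
    fix e assume "e \<in> {{A, B} | A B. A \<in> W \<and> B \<in> W \<and> adj A B}"
    then obtain p q where pq: "e = {Tr m k p, Tr m k q}" "p < l" "q < l" "adj (Tr m k p) (Tr m k q)"
      unfolding W_def by blast
    have ne: "p \<noteq> q" using pq(4) Tr_card[OF dl[OF pq(2)]] unfolding adj_def by auto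
    have md: "p mod k = q mod k" using Tr_adj dl pq by blast
    show "e \<in> (\<lambda>(p,q). {Tr m k p, Tr m k q}) ` P"
    proof (cases "p < q")
      case True thus ?thesis using pq md unfolding P_def by blast
    next
      case False
      hence "q < p" using ne by simp
      hence "(q,p) \<in> P" using pq md unfolding P_def by simp
      moreover have "e = {Tr m k q, Tr m k p}" using pq(1) by blast
      ultimately show ?thesis by force
    qed
  qed
  have "redges W \<le> card P" unfolding redges_def
    using card_mono[OF _ Esub] card_image_le[OF finP] finP by (meson finite_imageI le_trans)
  also have "P = (\<Union>q\<in>{..<l}. (\<lambda>p. (p,q)) ` {p. p < q \<and> p mod k = q mod k})" unfolding P_def by auto
  hence "card P \<le> (\<Sum>q<l. card ((\<lambda>p. (p,q)) ` {p. p < q \<and> p mod k = q mod k}))"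
    using card_UN_le[of "{..<l}"] by simp
  also have "\<dots> \<le> (\<Sum>q<l. q div k)"
    by (rule sum_mono) (metis card_image_le card_same_res finite_Collect_less_nat finite_Collect_conjI le_trans)
  finally have r2: "rmin n l \<le> (\<Sum>q<l. q div k)" using r1 by linarith
  have "real (rmin n l) \<le> (\<Sum>q<l. real (q div k))" using r2 by (metis of_nat_mono of_nat_sum)
  also have "\<dots> \<le> (\<Sum>q<l. real q / real k)" by (rule sum_mono) (rule of_nat_div_le_of_nat)
  also have "\<dots> = (\<Sum>q<l. real q) / real k" by (simp add: sum_divide_distrib)
  also have "\<dots> \<le> real l ^ 2 / (2 * real k)" using gauss_le[of l] k by (simp add: field_simps)
  finally show "real (rmin n l) \<le> real l ^ 2 / (2 * real k)" .
qed




lemma main_asymp: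
  fixes f g l :: "nat \<Rightarrow> nat"
  assumes af: "(\<lambda>n. real n) \<in> o(\<lambda>n. real (f n))"
    and ag: "(\<lambda>n. real (g n)) \<in> o(\<lambda>n. (real n)^2)"
    and fl: "\<And>n. f n \<le> l n \<and> l n \<le> g n"
  shows "(\<lambda>n. real (rmin n (l n))) \<sim>[at_top] (\<lambda>n. real (l n)^2 / (2 * real (alpha n)))"
proof -
  define m where "m n = 2 * l n div n + 1" for n
  define k where "k n = n - 2 * m n" for n
  have ev1: "eventually (\<lambda>n. real n \<le> real (f n)) at_top"
    using landau_o.smallD[OF af, of 1] by simp
  have t1: "((\<lambda>n. real n / real (f n)) \<longlongrightarrow> 0) at_top" using smalloD_tendsto[OF af] .
  have t2: "((\<lambda>n. real (g n) / real n ^ 2) \<longlongrightarrow> 0) at_top" using smalloD_tendsto[OF ag] .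
  have evpos: "eventually (\<lambda>n. (1::nat) \<le> n) at_top" by (rule eventually_ge_at_top)
  have A: "((\<lambda>n. real n / real (l n)) \<longlongrightarrow> 0) at_top"
  proof (rule tendsto_sandwich[OF _ _ tendsto_const t1])
    show "eventually (\<lambda>n. 0 \<le> real n / real (l n)) at_top" by simp
    show "eventually (\<lambda>n. real n / real (l n) \<le> real n / real (f n)) at_top"
      using ev1 evpos
    proof eventually_elim
      case (elim n)
      have "real (f n) > 0" using elim by simp
      moreover have "real (f n) \<le> real (l n)" using fl[of n] by simp
      ultimately show ?case by (simp add: frac_le)
    qed
  qed
  have B: "((\<lambda>n. real (l n) / real n ^ 2) \<longlongrightarrow> 0) at_top"
  proof (rule tendsto_sandwich[OF _ _ tendsto_const t2])
    show "eventually (\<lambda>n. 0 \<le> real (l n) / real n ^ 2) at_top" by simp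
    show "eventually (\<lambda>n. real (l n) / real n ^ 2 \<le> real (g n) / real n ^ 2) at_top"
      using fl by (intro always_eventually allI divide_right_mono) auto
  qed
  have inv: "((\<lambda>n. 1 / real n) \<longlongrightarrow> 0) at_top" using lim_inverse_n' by simp
  have C0: "((\<lambda>n. 4 * (real (l n) / real n ^ 2) + 2 * (1 / real n)) \<longlongrightarrow> 0) at_top"
    using tendsto_add[OF tendsto_mult_right_zero[OF B, of 4] tendsto_mult_right_zero[OF inv, of 2]] by simp
  have C: "((\<lambda>n. real (2 * m n) / real n) \<longlongrightarrow> 0) at_top"
  proof (rule tendsto_sandwich[OF _ _ tendsto_const C0])
    show "eventually (\<lambda>n. 0 \<le> real (2 * m n) / real n) at_top" by simp
    show "eventually (\<lambda>n. real (2 * m n) / real n \<le> 4 * (real (l n) / real n ^ 2) + 2 * (1 / real n)) at_top"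
      using evpos
    proof eventually_elim
      case (elim n)
      have np: "real n > 0" using elim by simp
      have "real (2 * l n div n) \<le> real (2 * l n) / real n" by (rule of_nat_div_le_of_nat)
      hence "real (m n) \<le> 2 * real (l n) / real n + 1" unfolding m_def by simp
      hence "real (2 * m n) \<le> 4 * real (l n) / real n + 2" by simp
      hence "real (2 * m n) / real n \<le> (4 * real (l n) / real n + 2) / real n"
        using np by (simp add: divide_right_mono)
      also have "\<dots> = 4 * (real (l n) / real n ^ 2) + 2 * (1 / real n)"
        using np by (simp add: field_simps power2_eq_square)
      finally show ?case .
    qed
  qed
  have ev4: "eventually (\<lambda>n. real (2 * m n) / real n < 1/2) at_top"
    using C by (rule order_tendstoD) simp
  have Dlow: "((\<lambda>n. 1 - real n / real (l n)) \<longlongrightarrow> 1) at_top"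
    using tendsto_diff[OF tendsto_const A, of 1] by simp
  have Dup: "((\<lambda>n. 1 / (1 - real (2 * m n) / real n)) \<longlongrightarrow> 1) at_top"
    using tendsto_divide[OF tendsto_const tendsto_diff[OF tendsto_const C, of 1], of 1] by simp
  define \<rho> where "\<rho> n = real (rmin n (l n)) / (real (l n)^2 / (2 * real (alpha n)))" for n
  have key: "eventually (\<lambda>n. 1 - real n / real (l n) \<le> \<rho> n \<and>
                 \<rho> n \<le> 1 / (1 - real (2 * m n) / real n)) at_top"
    using ev4 evpos ev1
  proof eventually_elim
    case (elim n)
    define L where "L = l n"
    define M where "M = m n"
    define K where "K = k n"
    have n1: "1 \<le> n" using elim by simp
    have nL: "n \<le> L" using elim(3) fl[of n] unfolding L_def by simp
    have Lp: "0 < L" using n1 nL by simp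
    have M4: "4 * M < n" using elim(1) n1 unfolding M_def
      by (simp add: divide_less_eq)
    have M1: "1 \<le> M" unfolding M_def m_def by simp
    have nK: "n = 2 * M + K" unfolding K_def k_def using M4 unfolding M_def by simp
    have Kp: "0 < K" using nK M4 M1 by simp
    have nM: "2 * L < n * M"
    proof -
      have e: "n * (2 * L div n) + 2 * L mod n = 2 * L" by (rule mult_div_mod_eq)
      have "2 * L mod n < n" using n1 by simp
      moreover have "n * M = n * (2 * L div n) + n" unfolding M_def m_def L_def by simp
      ultimately show ?thesis using e by linarith
    qed
    have LKM: "L \<le> K * M"
    proof -
      have "n * M = 2 * (M * M) + K * M" using nK by (simp add: algebra_simps)
      moreover have "4 * M * M \<le> n * M" using M4 by (intro mult_right_mono) simp_all
      ultimately have "2 * (K * M) \<ge> n * M" by linarith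
      thus ?thesis using nM by linarith
    qed
    obtain W where W: "W \<subseteq> V n" "card W = L" "rmin n L = redges W"
      using rmin_upper(2)[OF nK Kp LKM] by blast
    have up: "real (rmin n L) \<le> real L ^ 2 / (2 * real K)" using rmin_upper(1)[OF nK Kp LKM] .
    have lo: "real L ^ 2 \<le> real (alpha n) * (2 * real (rmin n L) + real L)"
      using lower_bound[OF W(1)] W(2,3) Lp by simp
    have al: "real (alpha n) \<le> real n" using alpha_le by simp
    have ap: "0 < real (alpha n)"
    proof (rule ccontr)
      assume "\<not> 0 < real (alpha n)"
      hence "real (alpha n) = 0" by simp
      thus False using lo Lp by simp
    qed
    have Lr: "0 < real L" using Lp by simp
    have rho: "\<rho> n = 2 * real (alpha n) * real (rmin n L) / real L ^ 2"
      unfolding \<rho>_def L_def using ap Lr by (simp add: field_simps)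
    have lower: "1 - real n / real L \<le> \<rho> n"
    proof -
      have "real L ^ 2 - real (alpha n) * real L \<le> 2 * real (alpha n) * real (rmin n L)"
        using lo by (simp add: algebra_simps)
      hence "(real L ^ 2 - real (alpha n) * real L) / real L ^ 2 \<le> \<rho> n"
        unfolding rho using Lr by (simp add: divide_right_mono)
      moreover have "(real L ^ 2 - real (alpha n) * real L) / real L ^ 2 = 1 - real (alpha n) / real L"
        using Lr by (simp add: field_simps power2_eq_square)
      moreover have "real (alpha n) / real L \<le> real n / real L" using al Lr by (simp add: divide_right_mono)
      ultimately show ?thesis by linarith
    qed
    have Kr: "0 < real K" using Kp by simp
    have upper: "\<rho> n \<le> 1 / (1 - real (2 * m n) / real n)"
    proof -
      have "\<rho> n \<le> 2 * real (alpha n) * (real L ^ 2 / (2 * real K)) / real L ^ 2"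
        unfolding rho using up ap Lr by (intro divide_right_mono mult_left_mono) auto
      also have "\<dots> = real (alpha n) / real K" using Lr Kr by (simp add: field_simps)
      also have "\<dots> \<le> real n / real K" using al Kr by (simp add: divide_right_mono)
      also have "\<dots> = 1 / (1 - real (2 * m n) / real n)"
        using nK n1 Kr unfolding M_def by (simp add: field_simps)
      finally show ?thesis .
    qed
    show ?case using lower upper unfolding L_def by simp
  qed
  have "(\<rho> \<longlongrightarrow> 1) at_top"
    by (rule tendsto_sandwich[OF eventually_mono[OF key] eventually_mono[OF key] Dlow Dup]) auto
  thus ?thesis unfolding \<rho>_def by (rule asymp_equivI')
qed


theorem theorem1:
  fixes f g l :: "nat \<Rightarrow> nat"
  assumes "(\<lambda>n. real n) \<in> o(\<lambda>n. real (f n))"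
    and "(\<lambda>n. real (g n)) \<in> o(\<lambda>n. (real n)^2)"
    and "\<And>n. f n \<le> l n \<and> l n \<le> g n"
  shows "(\<lambda>n. real (rmin n (l n))) \<sim>[at_top] (\<lambda>n. real (l n)^2 / (2 * real (alpha n)))"
  using main_asymp[OF assms] .

end
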